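(* For any $x>0$ with $x\neq 1$, \[ \sqrt{x}+\frac{4}{\ln^{2}x}\left(\frac{1}{8}(x-1)\ln x+\sqrt{x}-\frac{x+1}{2}\right)\le\frac{1+x}{2}. \] *)

theory Defs
  imports Complex_Main
begin

end

theory Submission
  imports Defs
begin

definition gg :: "real \<Rightarrow> real" where
  "gg u = (4*u^2+1)*(exp u - exp (-u)) - u*(exp u + exp (-u))"

lemma gg_deriv: "(gg has_real_derivative
   (7*u*(exp u - exp (-u)) + 4*u^2*(exp u + exp (-u)))) (at u)"
proof -
  have "(gg has_real_derivative
   ((4*(2*u))*(exp u - exp (-u)) + (4*u^2+1)*(exp u + exp (-u)) - (1*(exp u + exp (-u)) + u*(exp u - exp (-u))))) (at u)"
    unfolding gg_def[abs_def]
    by (auto intro!: derivative_eq_intros simp: power2_eq_square)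
  moreover have "(4*(2*u))*(exp u - exp (-u)) + (4*u^2+1)*(exp u + exp (-u)) - (1*(exp u + exp (-u)) + u*(exp u - exp (-u)))
     = 7*u*(exp u - exp (-u)) + 4*u^2*(exp u + exp (-u))"
    by (simp add: algebra_simps power2_eq_square)
  ultimately show ?thesis by (metis mult.assoc)
qed

lemma gg_nonneg: assumes "u \<ge> 0" shows "gg u \<ge> 0"
proof -
  have "gg 0 \<le> gg u"
  proof (rule DERIV_nonneg_imp_nondecreasing[OF assms])
    fix y :: real assume y: "0 \<le> y" "y \<le> u"
    have "exp (-y) \<le> exp y" using y by simp
    hence "0 \<le> 7*y*(exp y - exp (-y)) + 4*y^2*(exp y + exp (-y))"
      using y by (intro add_nonneg_nonneg mult_nonneg_nonneg) (auto intro: add_nonneg_nonneg)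
    thus "\<exists>y'. (gg has_real_derivative y') (at y) \<and> 0 \<le> y'" using gg_deriv by blast
  qed
  thus ?thesis by (simp add: gg_def)
qed

lemma gg_odd: "gg (-u) = - gg u" by (simp add: gg_def algebra_simps)

lemma key: "(exp u - exp (-u)) * gg u \<ge> 0"
proof (cases "u \<ge> 0")
  case True
  thus ?thesis using gg_nonneg[OF True] by (intro mult_nonneg_nonneg) auto
next
  case False
  hence "gg (-u) \<ge> 0" by (intro gg_nonneg) auto
  hence "gg u \<le> 0" by (simp add: gg_odd)
  moreover have "exp u - exp (-u) \<le> 0" using False by simp
  ultimately show ?thesis by (simp add: mult_nonpos_nonpos)
qed

theorem corollary2p4:
  fixes x :: real
  assumes "x > 0" and "x \<noteq> 1"
  shows "sqrt x + 4 / (ln x)^2 * ((1/8) * (x - 1) * ln x + sqrt x - (x + 1) / 2) \<le> (1 + x) / 2"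
proof -
  define u where "u = ln x / 4"
  define a where "a = exp u"
  have a0: "a > 0" by (simp add: a_def)
  have x: "x = a^4"
  proof -
    have "a^4 = exp (4*u)" by (simp add: a_def exp_of_nat_mult[symmetric])
    thus ?thesis using assms(1) by (simp add: u_def)
  qed
  have L: "ln x = 4*u" by (simp add: u_def)
  have s: "sqrt x = a^2" using x a0 by (simp add: real_sqrt_unique power_mult[symmetric] del: power_mult)
  have u0: "u \<noteq> 0" using assms by (simp add: u_def)
  have em: "exp (-u) = 1/a" by (simp add: a_def exp_minus field_simps)
  have k: "(a - 1/a) * ((4*u^2+1)*(a - 1/a) - u*(a + 1/a)) \<ge> 0"
    using key[of u] by (simp add: gg_def em a_def[symmetric])
  have k2: "(a^2 - 1) * ((4*u^2+1)*(a^2 - 1) - u*(a^2 + 1)) \<ge> 0"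
  proof -
    have "(a^2 - 1) * ((4*u^2+1)*(a^2 - 1) - u*(a^2 + 1)) = a^2 * ((a - 1/a) * ((4*u^2+1)*(a - 1/a) - u*(a + 1/a)))"
      using a0 by (simp add: field_simps power2_eq_square)
    thus ?thesis using k by simp
  qed
  have "(1 + x) / 2 - (sqrt x + 4 / (ln x)^2 * ((1/8) * (x - 1) * ln x + sqrt x - (x + 1) / 2))
      = ((a^2 - 1) * ((4*u^2+1)*(a^2 - 1) - u*(a^2 + 1))) / (8*u^2)"
    unfolding L s using u0 unfolding x by (simp add: field_simps power2_eq_square) (simp add: algebra_simps power2_eq_square power4_eq_xxxx)
  moreover have "... \<ge> 0" using k2 by simp
  ultimately show ?thesis by linarith
qed

end
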